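(* Let $G$ be an abelian group and $A$ an algebra in ${}^{G}_{G}\mathcal{YD}$ which is semisimple as a $\mathbb{C}$-algebra. Let $K\subset A$ be a central subfield which is invariant (i.e. $G$-fixed and of trivial $G$-degree) and over which $A$ is finite-dimensional. Then $A$ is projective as a right module over $A^{\underline{op}}\underline{\otimes}_K A$, where $A$ is a module via $m\cdot(a\otimes b)=(m_{-1}\cdot a)m_0b$.
   Context: ${}^{G}_{G}\mathcal{YD}$ is the category of Yetter–Drinfeld modules over $\mathbb{C}G$: $G$-modules with a $\mathbb{C}G$-coaction $v\mapsto v_{-1}\otimes v_0$ (for $G$ abelian, action and coaction commute), with braiding $v\otimes w\mapsto (v_{-1}w)\otimes v_0$. For algebras $A,B$ in this category, the braided tensor product $A\underline{\otimes}B$ has product $(a\otimes b)(a'\otimes b')=a(b_{-1}a')\otimes b_0b'$; $A^{\underline{op}}$ is $A$ with product $a\cdot_{\underline{op}}b=(a_{-1}b)a_0$; $A^{\underline{op}}\underline{\otimes}_KA$ is the analogous braided tensor product over $K$. *)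

theory Defs
  imports Complex_Main
begin

text \<open>
The abelian group G is a type 'g of class ab_group_add (written
additively).  The coaction of CG on A,
v |-> v_(-1) (x) v_0 = Sum_g g (x) cmp g v, is recorded by its coefficient maps
cmp g with respect to the basis G of CG (literal unfolding of a CG-comodule).
\<close>

definition gsupp :: "('g \<Rightarrow> 'a::zero \<Rightarrow> 'a) \<Rightarrow> 'a \<Rightarrow> 'g set" where
  "gsupp cmp x = {g. cmp g x \<noteq> 0}"

definition complex_algebra :: "(complex \<Rightarrow> 'a::ring_1 \<Rightarrow> 'a) \<Rightarrow> bool" where
  "complex_algebra sc \<longleftrightarrow> vector_space sc \<and>
     (\<forall>c x y. sc c (x * y) = sc c x * y \<and> sc c (x * y) = x * sc c y)"

definition YD_algebra ::
  "(complex \<Rightarrow> 'a::ring_1 \<Rightarrow> 'a) \<Rightarrow> ('g::ab_group_add \<Rightarrow> 'a \<Rightarrow> 'a) \<Rightarrow> ('g \<Rightarrow> 'a \<Rightarrow> 'a) \<Rightarrow> bool" where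
  "YD_algebra sc act cmp \<longleftrightarrow> complex_algebra sc \<and>
     \<comment> \<open>linear G-action\<close>
     (\<forall>x. act 0 x = x) \<and> (\<forall>g h x. act (g + h) x = act g (act h x)) \<and>
     (\<forall>g x y. act g (x + y) = act g x + act g y) \<and> (\<forall>g c x. act g (sc c x) = sc c (act g x)) \<and>
     \<comment> \<open>CG-comodule: linear, finitely supported, counital, coassociative\<close>
     (\<forall>g x y. cmp g (x + y) = cmp g x + cmp g y) \<and> (\<forall>g c x. cmp g (sc c x) = sc c (cmp g x)) \<and>
     (\<forall>x. finite (gsupp cmp x)) \<and>
     (\<forall>x. (\<Sum>g\<in>gsupp cmp x. cmp g x) = x) \<and>
     (\<forall>g h x. cmp g (cmp h x) = (if g = h then cmp g x else 0)) \<and>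
     \<comment> \<open>Yetter-Drinfeld compatibility (G abelian): action and coaction commute\<close>
     (\<forall>g h x. cmp g (act h x) = act h (cmp g x)) \<and>
     \<comment> \<open>multiplication and unit are G-module maps\<close>
     (\<forall>g x y. act g (x * y) = act g x * act g y) \<and> (\<forall>g. act g 1 = 1) \<and>
     \<comment> \<open>multiplication and unit are CG-comodule maps\<close>
     (\<forall>k x y. cmp k (x * y) = (\<Sum>g\<in>gsupp cmp x. cmp g x * cmp (k - g) y)) \<and>
     (\<forall>g. cmp g 1 = (if g = 0 then 1 else 0))"

definition left_ideal :: "'a::ring_1 set \<Rightarrow> bool" where
  "left_ideal L \<longleftrightarrow> 0 \<in> L \<and> (\<forall>x\<in>L. \<forall>y\<in>L. x + y \<in> L) \<and> (\<forall>x\<in>L. - x \<in> L) \<and>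
     (\<forall>a. \<forall>x\<in>L. a * x \<in> L)"

definition semisimple_ring :: "'a::ring_1 itself \<Rightarrow> bool" where
  "semisimple_ring T \<longleftrightarrow> (\<forall>L::'a set. left_ideal L \<longrightarrow>
     (\<exists>L'. left_ideal L' \<and> L \<inter> L' = {0} \<and> (\<forall>x. \<exists>y\<in>L. \<exists>z\<in>L'. x = y + z)))"

definition central_subfield :: "(complex \<Rightarrow> 'a::ring_1 \<Rightarrow> 'a) \<Rightarrow> 'a set \<Rightarrow> bool" where
  "central_subfield sc K \<longleftrightarrow> (1::'a) \<noteq> 0 \<and> 0 \<in> K \<and> 1 \<in> K \<and>
     (\<forall>x\<in>K. \<forall>y\<in>K. x + y \<in> K \<and> x * y \<in> K) \<and> (\<forall>x\<in>K. - x \<in> K) \<and>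
     (\<forall>x\<in>K. x \<noteq> 0 \<longrightarrow> (\<exists>y\<in>K. x * y = 1)) \<and>
     (\<forall>c. \<forall>x\<in>K. sc c x \<in> K) \<and>
     (\<forall>x\<in>K. \<forall>a. x * a = a * x)"

definition invariant_set :: "('g::ab_group_add \<Rightarrow> 'a::ring_1 \<Rightarrow> 'a) \<Rightarrow> ('g \<Rightarrow> 'a \<Rightarrow> 'a) \<Rightarrow> 'a set \<Rightarrow> bool" where
  "invariant_set act cmp K \<longleftrightarrow> (\<forall>g. \<forall>x\<in>K. act g x = x) \<and> (\<forall>x\<in>K. cmp 0 x = x)"

definition finite_dim_over :: "'a::ring_1 set \<Rightarrow> bool" where
  "finite_dim_over K \<longleftrightarrow> (\<exists>S. finite S \<and> (\<forall>a. \<exists>c. (\<forall>s\<in>S. c s \<in> K) \<and> a = (\<Sum>s\<in>S. c s * s)))"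

text \<open>Braided opposite product: a \<cdot>op b = (a_(-1) b) a_0.\<close>
definition bop :: "('g \<Rightarrow> 'a::ring_1 \<Rightarrow> 'a) \<Rightarrow> ('g \<Rightarrow> 'a \<Rightarrow> 'a) \<Rightarrow> 'a \<Rightarrow> 'a \<Rightarrow> 'a" where
  "bop act cmp a b = (\<Sum>h\<in>gsupp cmp a. act h b * cmp h a)"

text \<open>
Right module over B = A^op (braided tensor over K) A.  The map rho n a b stands for
n . (a (x) b).  B is spanned by pure tensors subject to biadditivity and K-balancing,
with product (a (x) b)(a' (x) b') = a \<cdot>op (b_(-1) a') (x) b_0 b'; so a right B-module
on an abelian group 'm is exactly such a rho, additive in n, biadditive and
K-balanced in (a,b), unital and associative on pure tensors.
\<close>
definition is_rmod ::
  "('g \<Rightarrow> 'a::ring_1 \<Rightarrow> 'a) \<Rightarrow> ('g \<Rightarrow> 'a \<Rightarrow> 'a) \<Rightarrow> 'a set \<Rightarrow> ('m::ab_group_add \<Rightarrow> 'a \<Rightarrow> 'a \<Rightarrow> 'm) \<Rightarrow> bool" where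
  "is_rmod act cmp K rho \<longleftrightarrow>
     (\<forall>n n' a b. rho (n + n') a b = rho n a b + rho n' a b) \<and>
     (\<forall>n a a' b. rho n (a + a') b = rho n a b + rho n a' b) \<and>
     (\<forall>n a b b'. rho n a (b + b') = rho n a b + rho n a b') \<and>
     (\<forall>n a b. \<forall>k\<in>K. rho n (bop act cmp a k) b = rho n a (k * b)) \<and>
     (\<forall>n. rho n 1 1 = n) \<and>
     (\<forall>n a b a' b'. rho (rho n a b) a' b' =
        (\<Sum>g\<in>gsupp cmp b. rho n (bop act cmp a (act g a')) (cmp g b * b')))"

definition rhom :: "('m::ab_group_add \<Rightarrow> 'a \<Rightarrow> 'a \<Rightarrow> 'm) \<Rightarrow> ('n::ab_group_add \<Rightarrow> 'a \<Rightarrow> 'a \<Rightarrow> 'n) \<Rightarrow> ('m \<Rightarrow> 'n) \<Rightarrow> bool" where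
  "rhom rho sigma f \<longleftrightarrow> (\<forall>x y. f (x + y) = f x + f y) \<and> (\<forall>n a b. f (rho n a b) = sigma (f n) a b)"

text \<open>
Projective right B-module: lifting property against all surjective B-module maps
between right B-modules whose underlying groups are the types 'm and 'n (these type
variables are arbitrary, hence universally quantified in any theorem using this).
\<close>
definition projective_rmod ::
  "'m::ab_group_add itself \<Rightarrow> 'n::ab_group_add itself \<Rightarrow> ('g \<Rightarrow> 'a::ring_1 \<Rightarrow> 'a) \<Rightarrow> ('g \<Rightarrow> 'a \<Rightarrow> 'a) \<Rightarrow> 'a set \<Rightarrow>
   ('p::ab_group_add \<Rightarrow> 'a \<Rightarrow> 'a \<Rightarrow> 'p) \<Rightarrow> bool" where
  "projective_rmod tm tn act cmp K rhoP \<longleftrightarrow> is_rmod act cmp K rhoP \<and>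
     (\<forall>(rhoN :: 'm \<Rightarrow> 'a \<Rightarrow> 'a \<Rightarrow> 'm) (rhoN' :: 'n \<Rightarrow> 'a \<Rightarrow> 'a \<Rightarrow> 'n) p f.
        is_rmod act cmp K rhoN \<and> is_rmod act cmp K rhoN' \<and> rhom rhoN rhoN' p \<and> surj p \<and>
        rhom rhoP rhoN' f \<longrightarrow> (\<exists>h. rhom rhoP rhoN h \<and> (\<forall>x. p (h x) = f x)))"

definition reg_action :: "('g \<Rightarrow> 'a::ring_1 \<Rightarrow> 'a) \<Rightarrow> ('g \<Rightarrow> 'a \<Rightarrow> 'a) \<Rightarrow> 'a \<Rightarrow> 'a \<Rightarrow> 'a \<Rightarrow> 'a" where
  "reg_action act cmp m a b = (\<Sum>g\<in>gsupp cmp m. act g a * cmp g m * b)"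

end

theory Submission
  imports Defs "HOL-Algebra.Embedded_Algebras"
begin


definition RR :: "'a::ring_1 ring" where
  "RR = \<lparr>carrier = UNIV, monoid.mult = (\<lambda>x y. x * y), one = 1, ring.zero = 0, add = (\<lambda>x y. x + y)\<rparr>"

lemma RR_simps [simp]: "carrier RR = UNIV" "monoid.mult RR = (\<lambda>x y. x * y)" "one RR = 1"
  "ring.zero RR = 0" "add RR = (\<lambda>x y. x + y)"
  by (simp_all add: RR_def)

lemma ring_RR: "ring (RR :: 'a::ring_1 ring)"
proof -
  have "\<exists>y. x + y = 0" for x :: 'a
    using add.right_inverse by blast
  thus ?thesis
    unfolding RR_def using add.right_inverse
    by unfold_locales (auto simp: algebra_simps Units_def)
qed

lemma a_inv_RR [simp]: "a_inv RR x = - (x::'a::ring_1)"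
proof -
  interpret R: ring "RR :: 'a ring" by (rule ring_RR)
  show ?thesis using R.minus_equality[of "- x" x] by simp
qed

locale KF =
  fixes K :: "'a::ring_1 set"
  assumes K0: "0 \<in> K" and K1: "1 \<in> K"
    and Kadd: "x \<in> K \<Longrightarrow> y \<in> K \<Longrightarrow> x + y \<in> K"
    and Kmul: "x \<in> K \<Longrightarrow> y \<in> K \<Longrightarrow> x * y \<in> K"
    and Kneg: "x \<in> K \<Longrightarrow> - x \<in> K"
    and Kinv: "x \<in> K \<Longrightarrow> x \<noteq> 0 \<Longrightarrow> \<exists>y\<in>K. x * y = 1"
    and Kcomm: "x \<in> K \<Longrightarrow> x * a = a * x"
    and one_ne: "(1::'a) \<noteq> 0"
begin

lemma subfield_K: "subfield K RR"
proof -
  interpret R: ring "RR :: 'a ring" by (rule ring_RR)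
  have sr: "subring K RR"
    by (rule R.subringI) (auto intro: K1 Kneg Kmul Kadd)
  have sc: "subcring K RR"
    by (rule R.subcringI[OF sr]) (auto intro: Kcomm)
  show ?thesis
  proof (rule R.subfieldI[OF sc])
    show "Units (RR\<lparr>carrier := K\<rparr>) = K - {\<zero>\<^bsub>RR\<^esub>}"
    proof
      show "Units (RR\<lparr>carrier := K\<rparr>) \<subseteq> K - {\<zero>\<^bsub>RR\<^esub>}"
        using one_ne by (auto simp: Units_def)
      show "K - {\<zero>\<^bsub>RR\<^esub>} \<subseteq> Units (RR\<lparr>carrier := K\<rparr>)"
      proof
        fix x assume x: "x \<in> K - {\<zero>\<^bsub>RR\<^esub>}"
        then obtain y where y: "y \<in> K" "x * y = 1" using Kinv by auto
        moreover have "y * x = 1" using Kcomm[OF y(1)] y(2) by simp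
        ultimately show "x \<in> Units (RR\<lparr>carrier := K\<rparr>)" using x by (auto simp: Units_def)
      qed
    qed
  qed
qed

end

definition lc :: "(nat \<Rightarrow> 'a::ring_1) \<Rightarrow> 'a list \<Rightarrow> 'a" where
  "lc c us = (\<Sum>i<length us. c i * us ! i)"

definition indepL :: "'a::ring_1 set \<Rightarrow> 'a list \<Rightarrow> bool" where
  "indepL K us \<longleftrightarrow> (\<forall>c. (\<forall>i<length us. c i \<in> K) \<longrightarrow> lc c us = 0 \<longrightarrow> (\<forall>i<length us. c i = 0))"

definition spanL :: "'a::ring_1 set \<Rightarrow> 'a list \<Rightarrow> 'a set" where
  "spanL K us = {lc c us | c. \<forall>i<length us. c i \<in> K}"

lemma lc_Nil [simp]: "lc c [] = 0" by (simp add: lc_def)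
lemma lc_Cons: "lc c (u # us) = c 0 * u + lc (\<lambda>i. c (Suc i)) us"
  unfolding lc_def by (simp add: sum.lessThan_Suc_shift del: sum.lessThan_Suc)

lemma lc_cong: "(\<And>i. i < length us \<Longrightarrow> c i = d i) \<Longrightarrow> lc c us = lc d us"
  unfolding lc_def by (rule sum.cong) auto

context KF
begin

sublocale R: ring "RR :: 'a ring" by (rule ring_RR)

lemma combine_lc: "R.combine Ks Us = lc (\<lambda>i. if i < length Ks then Ks ! i else 0) Us"
proof (induct Ks Us rule: R.combine.induct)
  case (1 k Ks u Us)
  show ?case using 1 by (simp add: lc_Cons) (rule lc_cong, simp)
next
  case ("2_1" Us) show ?case unfolding lc_def by simp
next
  case ("2_2" Ks) show ?case by simp
qed

end

context KF begin
lemma Span_eq: "R.Span K Us = spanL K Us"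
proof -
  have "R.Span K Us = {R.combine Ks Us |Ks. length Ks = length Us \<and> set Ks \<subseteq> K}"
    by (rule R.Span_eq_combine_set_length_version[OF subfield_K]) simp
  also have "\<dots> = spanL K Us"
  proof
    show "{R.combine Ks Us |Ks. length Ks = length Us \<and> set Ks \<subseteq> K} \<subseteq> spanL K Us"
    proof
      fix x assume "x \<in> {R.combine Ks Us |Ks. length Ks = length Us \<and> set Ks \<subseteq> K}"
      then obtain Ks where Ks: "length Ks = length Us" "set Ks \<subseteq> K" "x = R.combine Ks Us" by blast
      show "x \<in> spanL K Us" unfolding spanL_def
        using Ks combine_lc[of Ks Us] by (auto intro!: exI[of _ "\<lambda>i. if i < length Ks then Ks ! i else 0"])
    qed
    show "spanL K Us \<subseteq> {R.combine Ks Us |Ks. length Ks = length Us \<and> set Ks \<subseteq> K}"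
    proof
      fix x assume "x \<in> spanL K Us"
      then obtain c where c: "\<forall>i<length Us. c i \<in> K" "x = lc c Us" unfolding spanL_def by blast
      have "x = R.combine (map c [0..<length Us]) Us"
        using c by (simp add: combine_lc cong: lc_cong)
      moreover have "set (map c [0..<length Us]) \<subseteq> K" using c by auto
      ultimately show "x \<in> {R.combine Ks Us |Ks. length Ks = length Us \<and> set Ks \<subseteq> K}"
        by (intro CollectI exI[of _ "map c [0..<length Us]"]) (simp del: R.combine.simps)
    qed
  qed
  finally show ?thesis .
qed

lemma indep_eq: "R.independent K Us \<longleftrightarrow> indepL K Us"
proof
  assume ind: "R.independent K Us"
  show "indepL K Us" unfolding indepL_def
  proof (intro allI impI)
    fix c i assume c: "\<forall>i<length Us. c i \<in> K" and z: "lc c Us = 0" and i: "i < length Us"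
    have "R.combine (map c [0..<length Us]) Us = 0"
      using z by (simp add: combine_lc cong: lc_cong)
    moreover have "set (map c [0..<length Us]) \<subseteq> K" using c by auto
    ultimately have "set (take (length Us) (map c [0..<length Us])) \<subseteq> {0}"
      using R.independent_imp_trivial_combine[OF subfield_K ind, of "map c [0..<length Us]"] by (simp del: R.combine.simps)
    moreover have "c i \<in> set (take (length Us) (map c [0..<length Us]))" using i by simp
    ultimately show "c i = 0" by blast
  qed
next
  assume ind: "indepL K Us"
  show "R.independent K Us"
  proof (rule R.trivial_combine_imp_independent[OF subfield_K])
    show "set Us \<subseteq> carrier RR" by simp
    fix Ks assume Ks: "set Ks \<subseteq> K" "R.combine Ks Us = \<zero>\<^bsub>RR\<^esub>"
    define c where "c = (\<lambda>i. if i < length Ks then Ks ! i else 0)"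
    have "\<forall>i<length Us. c i \<in> K" using Ks(1) K0 unfolding c_def by (auto dest: nth_mem)
    moreover have "lc c Us = 0" using Ks(2) combine_lc[of Ks Us] unfolding c_def by simp
    ultimately have "\<forall>i<length Us. c i = 0" using ind unfolding indepL_def by blast
    thus "set (take (length Us) Ks) \<subseteq> {\<zero>\<^bsub>RR\<^esub>}"
    proof (auto simp: set_conv_nth)
      fix i assume "\<forall>i<length Us. c i = 0" "i < length Ks" "i < length Us"
      thus "Ks ! i = 0" unfolding c_def by (metis (full_types))
    qed
  qed
qed

lemma filter_basisL:
  "\<exists>Vs. set Vs \<subseteq> set Us \<and> indepL K Vs \<and> spanL K Vs = spanL K Us"
proof -
  have "\<exists>Vs. set Vs \<subseteq> set Us \<and> R.independent K Vs \<and> R.Span K Vs = R.Span K Us"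
  proof (induction Us)
    case Nil thus ?case by auto
  next
    case (Cons u Us)
    then obtain Vs where Vs: "set Vs \<subseteq> set Us" "R.independent K Vs" "R.Span K Vs = R.Span K Us"
      by auto
    show ?case
    proof (cases "u \<in> R.Span K Us")
      case True
      have "R.Span K (u # Us) = R.Span K Us"
      proof
        have "set (u # Us) \<subseteq> R.Span K Us" using True R.Span_base_incl[OF subfield_K, of Us] by (simp del: R.Span.simps)
        thus "R.Span K (u # Us) \<subseteq> R.Span K Us" using R.mono_Span_subset[OF subfield_K, of "u # Us" Us] by (simp del: R.Span.simps)
        show "R.Span K Us \<subseteq> R.Span K (u # Us)" using R.mono_Span[OF subfield_K, of Us u] by (simp del: R.Span.simps)
      qed
      thus ?thesis
        using Vs by (metis set_subset_Cons subset_trans)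
    next
      case False
      have 1: "R.Span K (u # Vs) = R.Span K (u # Us)"
        using Vs(3) by (simp only: R.Span.simps foldr_Cons o_apply)
      have 2: "R.independent K (u # Vs)"
        using R.li_Cons[of u K Vs] Vs False by (simp del: R.Span.simps)
      have 3: "set (u # Vs) \<subseteq> set (u # Us)" using Vs(1) by auto
      show ?thesis using 1 2 3 by blast
    qed
  qed
  thus ?thesis using indep_eq Span_eq by metis
qed


lemma lc_map_lin:
  assumes add: "\<And>x y. T (x + y) = T x + T y" and hom: "\<And>k x. k \<in> K \<Longrightarrow> T (k * x) = k * T x"
  shows "\<forall>i<length us. c i \<in> K \<Longrightarrow> T (lc c us) = lc c (map T us)"
proof (induct us arbitrary: c)
  case Nil
  have "T 0 = T 0 + T 0" using add[of 0 0] by simp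
  thus ?case by simp
next
  case (Cons u us)
  have "T (lc c (u # us)) = T (c 0 * u) + T (lc (\<lambda>i. c (Suc i)) us)" by (simp add: lc_Cons add)
  also have "\<dots> = c 0 * T u + lc (\<lambda>i. c (Suc i)) (map T us)"
    using Cons by (simp add: hom)
  finally show ?case by (simp add: lc_Cons)
qed

lemma inj_surjL:
  assumes ind: "indepL K bs" and sp: "spanL K bs = UNIV"
    and add: "\<And>x y. T (x + y) = T x + T y" and hom: "\<And>k x. k \<in> K \<Longrightarrow> T (k * x) = k * T x"
    and inj: "\<And>x. T x = 0 \<Longrightarrow> x = 0"
  shows "\<exists>x. T x = y"
proof -
  have dim: "R.dimension (length bs) K UNIV"
  proof (rule R.dimensionI[OF subfield_K])
    show "R.independent K bs" using ind by (simp add: indep_eq)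
    show "R.Span K bs = UNIV" using sp by (simp only: Span_eq)
  qed
  have indT: "indepL K (map T bs)" unfolding indepL_def
  proof (intro allI impI)
    fix c i assume c: "\<forall>i<length (map T bs). c i \<in> K" and z: "lc c (map T bs) = 0" and i: "i < length (map T bs)"
    have "T (lc c bs) = 0" using z c lc_map_lin[OF add hom, of bs c] by simp
    hence "lc c bs = 0" by (rule inj)
    thus "c i = 0" using ind c i unfolding indepL_def by simp
  qed
  have "R.Span K (map T bs) = UNIV"
    using R.independent_length_eq_dimension[OF subfield_K dim, of "map T bs"] indT
    by (simp add: indep_eq del: R.Span.simps)
  hence "y \<in> spanL K (map T bs)" by (simp only: Span_eq) simp
  then obtain c where c: "\<forall>i<length bs. c i \<in> K" "y = lc c (map T bs)" unfolding spanL_def by auto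
  thus ?thesis using lc_map_lin[OF add hom, of bs c] by metis
qed

end


lemma additive_zero:
  fixes F :: "'b::ab_group_add \<Rightarrow> 'c::ab_group_add"
  assumes "\<And>x y. F (x + y) = F x + F y" shows "F 0 = 0"
  using assms[of 0 0] by simp

lemma additive_sum:
  fixes F :: "'b::ab_group_add \<Rightarrow> 'c::ab_group_add"
  assumes "\<And>x y. F (x + y) = F x + F y" shows "F (sum f A) = (\<Sum>a\<in>A. F (f a))"
proof (cases "finite A")
  case True thus ?thesis by induct (auto simp: assms additive_zero[OF assms])
next
  case False thus ?thesis by (simp add: additive_zero[OF assms])
qed

lemma additive_neg:
  fixes F :: "'b::ab_group_add \<Rightarrow> 'c::ab_group_add"
  assumes "\<And>x y. F (x + y) = F x + F y" shows "F (- x) = - F x"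
proof -
  have "F x + F (- x) = 0" using assms[of x "- x"] additive_zero[OF assms] by simp
  thus ?thesis by (simp add: add_eq_0_iff)
qed

lemma additive_diff:
  fixes F :: "'b::ab_group_add \<Rightarrow> 'c::ab_group_add"
  assumes "\<And>x y. F (x + y) = F x + F y" shows "F (x - y) = F x - F y"
  using assms[of x "- y"] additive_neg[OF assms, of y] by simp

lemma lc_add: "lc c us + lc d us = lc (\<lambda>i. c i + d i) us"
  unfolding lc_def by (simp add: sum.distrib distrib_right)
lemma lc_diff: "lc c us - lc d us = lc (\<lambda>i. c i - d i) us"
  unfolding lc_def by (simp add: sum_subtractf left_diff_distrib)
lemma lc_smult: "k * lc c us = lc (\<lambda>i. k * c i) us"
  unfolding lc_def by (simp add: sum_distrib_left mult.assoc)
lemma lc_zero: "lc (\<lambda>i. 0) us = 0"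
  unfolding lc_def by simp
lemma lc_append: "lc c (vs @ ws) = lc c vs + lc (\<lambda>i. c (length vs + i)) ws"
  by (induct vs arbitrary: c) (simp_all add: lc_Cons add.assoc)

definition isbasis :: "'a::ring_1 set \<Rightarrow> 'a list \<Rightarrow> bool" where
  "isbasis K bs \<longleftrightarrow> indepL K bs \<and> spanL K bs = UNIV"

definition coord :: "'a::ring_1 set \<Rightarrow> 'a list \<Rightarrow> 'a \<Rightarrow> nat \<Rightarrow> 'a" where
  "coord K bs x = (SOME c. (\<forall>i<length bs. c i \<in> K) \<and> x = lc c bs)"

definition klin :: "'a::ring_1 set \<Rightarrow> ('a \<Rightarrow> 'a) \<Rightarrow> bool" where
  "klin K T \<longleftrightarrow> (\<forall>x y. T (x + y) = T x + T y) \<and> (\<forall>k\<in>K. \<forall>x. T (k * x) = k * T x)"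

definition tr :: "'a::ring_1 set \<Rightarrow> 'a list \<Rightarrow> ('a \<Rightarrow> 'a) \<Rightarrow> 'a" where
  "tr K bs T = (\<Sum>i<length bs. coord K bs (T (bs ! i)) i)"

context KF
begin

lemma Ksum: "(\<And>a. a \<in> A \<Longrightarrow> f a \<in> K) \<Longrightarrow> sum f A \<in> K"
  by (induct A rule: infinite_finite_induct) (auto intro: K0 Kadd)

lemma Kdiff: "x \<in> K \<Longrightarrow> y \<in> K \<Longrightarrow> x - y \<in> K"
  using Kadd[OF _ Kneg[of y]] by simp

lemma klinD: "klin K T \<Longrightarrow> T (x + y) = T x + T y" "klin K T \<Longrightarrow> k \<in> K \<Longrightarrow> T (k * x) = k * T x"
  unfolding klin_def by auto

lemma klin_sum: "klin K T \<Longrightarrow> T (sum f A) = (\<Sum>a\<in>A. T (f a))"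
  by (rule additive_sum) (simp add: klinD)

lemma klin_lc: "klin K T \<Longrightarrow> \<forall>i<length us. c i \<in> K \<Longrightarrow> T (lc c us) = lc c (map T us)"
  by (rule lc_map_lin) (auto simp: klinD)

context
  fixes bs assumes B: "isbasis K bs"
begin

lemma indepD: "(\<forall>i<length bs. c i \<in> K) \<Longrightarrow> lc c bs = 0 \<Longrightarrow> i < length bs \<Longrightarrow> c i = 0"
  using B unfolding isbasis_def indepL_def by blast

lemma coord_ex: "(\<forall>i<length bs. coord K bs x i \<in> K) \<and> x = lc (coord K bs x) bs"
proof -
  have "x \<in> spanL K bs" using B by (simp add: isbasis_def)
  hence "\<exists>c. (\<forall>i<length bs. c i \<in> K) \<and> x = lc c bs" unfolding spanL_def by blast
  thus ?thesis unfolding coord_def by (rule someI_ex)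
qed

lemma coord_K: "i < length bs \<Longrightarrow> coord K bs x i \<in> K"
  using coord_ex by blast

lemma coord_exp: "x = lc (coord K bs x) bs"
  using coord_ex by blast

lemma coord_unique:
  assumes c: "\<forall>i<length bs. c i \<in> K" and x: "x = lc c bs" and i: "i < length bs"
  shows "coord K bs x i = c i"
proof -
  have "lc (\<lambda>i. coord K bs x i - c i) bs = 0"
    using lc_diff[of "coord K bs x" bs c] coord_exp[of x] x by simp
  moreover have "\<forall>i<length bs. coord K bs x i - c i \<in> K" using c coord_K by (simp add: Kdiff)
  ultimately have "coord K bs x i - c i = 0"
    using indepD[of "\<lambda>i. coord K bs x i - c i" i] i by simp
  thus ?thesis by simp
qed

lemma coord_add: "i < length bs \<Longrightarrow> coord K bs (x + y) i = coord K bs x i + coord K bs y i"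
  by (rule coord_unique) (auto simp: coord_K Kadd lc_add[symmetric] coord_exp[symmetric])

lemma coord_add': "coord K bs (x + y) i = coord K bs x i + coord K bs y i \<or> \<not> i < length bs"
  using coord_add by blast

lemma coord_mul: "k \<in> K \<Longrightarrow> i < length bs \<Longrightarrow> coord K bs (k * x) i = k * coord K bs x i"
  by (rule coord_unique) (auto simp: coord_K Kmul lc_smult[symmetric] coord_exp[symmetric])

lemma coord_sum: "i < length bs \<Longrightarrow> coord K bs (sum f A) i = (\<Sum>a\<in>A. coord K bs (f a) i)"
  by (rule additive_sum[where F = "\<lambda>x. coord K bs x i"]) (simp add: coord_add)

lemma coord_zero: "i < length bs \<Longrightarrow> coord K bs 0 i = 0"
  by (rule additive_zero[where F = "\<lambda>x. coord K bs x i"]) (simp add: coord_add)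

lemma coord_basis: "i < length bs \<Longrightarrow> j < length bs \<Longrightarrow> coord K bs (bs ! j) i = (if i = j then 1 else 0)"
proof (rule coord_unique)
  assume j: "j < length bs"
  show "\<forall>i<length bs. (\<lambda>i. if i = j then 1 else 0) i \<in> K" using K0 K1 by simp
  show "bs ! j = lc (\<lambda>i. if i = j then 1 else 0) bs"
  proof -
    have "(\<Sum>i<length bs. (if i = j then 1 else 0) * bs ! i) = (\<Sum>i<length bs. if i = j then bs ! i else 0)"
      by (rule sum.cong) auto
    thus ?thesis unfolding lc_def using j by simp
  qed
qed

lemma lc_coord_sum: "lc c bs = (\<Sum>j<length bs. c j * bs ! j)"
  by (simp add: lc_def)

lemma coord_klin_expand:
  assumes P: "klin K P" and i: "i < length bs"
  shows "coord K bs (P x) i = (\<Sum>j<length bs. coord K bs x j * coord K bs (P (bs ! j)) i)"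
proof -
  have "P x = P (\<Sum>j<length bs. coord K bs x j * bs ! j)"
    using coord_exp[of x] by (simp add: lc_def)
  also have "\<dots> = (\<Sum>j<length bs. coord K bs x j * P (bs ! j))"
    by (simp add: klin_sum[OF P] klinD(2)[OF P] coord_K)
  finally show ?thesis by (simp add: coord_sum[OF i] coord_mul[OF _ i] coord_K)
qed

end
end


context KF
begin

lemma coord_klin_expand2:
  assumes B: "isbasis K bs" and C: "isbasis K cs" and P: "klin K P" and i: "i < length bs"
  shows "coord K bs (P x) i = (\<Sum>j<length cs. coord K cs x j * coord K bs (P (cs ! j)) i)"
proof -
  have "P x = P (\<Sum>j<length cs. coord K cs x j * cs ! j)"
    using coord_exp[OF C, of x] by (simp add: lc_def)
  also have "\<dots> = (\<Sum>j<length cs. coord K cs x j * P (cs ! j))"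
    by (simp add: klin_sum[OF P] klinD(2)[OF P] coord_K[OF C])
  finally show ?thesis by (simp add: coord_sum[OF B i] coord_mul[OF B _ i] coord_K[OF C])
qed

lemma tr_comm:
  assumes B: "isbasis K bs" and P: "klin K P" and Q: "klin K Q"
  shows "tr K bs (\<lambda>x. P (Q x)) = tr K bs (\<lambda>x. Q (P x))"
proof -
  let ?n = "length bs"
  have "tr K bs (\<lambda>x. P (Q x)) = (\<Sum>i<?n. \<Sum>j<?n. coord K bs (Q (bs ! i)) j * coord K bs (P (bs ! j)) i)"
    unfolding tr_def by (rule sum.cong) (simp_all add: coord_klin_expand2[OF B B P])
  also have "\<dots> = (\<Sum>j<?n. \<Sum>i<?n. coord K bs (P (bs ! j)) i * coord K bs (Q (bs ! i)) j)"
    by (subst sum.swap) (intro sum.cong refl; rule Kcomm[OF coord_K[OF B]]; simp)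
  also have "\<dots> = tr K bs (\<lambda>x. Q (P x))"
    unfolding tr_def by (rule sum.cong) (simp_all add: coord_klin_expand2[OF B B Q])
  finally show ?thesis .
qed

lemma tr_indep:
  assumes B: "isbasis K bs" and C: "isbasis K cs" and T: "klin K T"
  shows "tr K bs T = tr K cs T"
proof -
  have "tr K bs T = (\<Sum>i<length bs. \<Sum>j<length cs. coord K cs (bs ! i) j * coord K bs (T (cs ! j)) i)"
    unfolding tr_def by (rule sum.cong) (simp_all add: coord_klin_expand2[OF B C T])
  also have "\<dots> = (\<Sum>j<length cs. \<Sum>i<length bs. coord K bs (T (cs ! j)) i * coord K cs (bs ! i) j)"
    by (subst sum.swap) (intro sum.cong refl; rule Kcomm[OF coord_K[OF C]]; simp)
  also have "\<dots> = (\<Sum>j<length cs. coord K cs (\<Sum>i<length bs. coord K bs (T (cs ! j)) i * bs ! i) j)"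
    by (rule sum.cong) (simp_all add: coord_sum[OF C] coord_mul[OF C] coord_K[OF B])
  also have "\<dots> = tr K cs T"
    unfolding tr_def by (rule sum.cong) (simp_all add: coord_exp[OF B, symmetric, unfolded lc_def])
  finally show ?thesis .
qed


lemma sum_indicator_less:
  assumes "n \<le> N" shows "(\<Sum>i<N. if i < n then 1 else 0) = (of_nat n :: 'b::semiring_1)"
proof -
  have e: "{..<N} \<inter> {i. i < n} = {..<n}" using assms by auto
  have "(\<Sum>i<N. if i < n then (1::'b) else 0) = (\<Sum>i\<in>{..<N} \<inter> {i. i < n}. 1)"
    by (subst sum.inter_restrict) simp_all
  also have "\<dots> = (\<Sum>i\<in>{..<n}. 1)" by (simp only: e)
  finally show ?thesis by simp
qed

lemma tr_idem:
  assumes B: "isbasis K bs" and P: "klin K P" and idem: "\<And>x. P (P x) = P x" and nz: "P x0 \<noteq> 0"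
    and ch: "\<And>m::nat. m > 0 \<Longrightarrow> (of_nat m :: 'a) \<noteq> 0"
  shows "tr K bs P \<noteq> 0"
proof -
  obtain vs where vs: "set vs \<subseteq> set (map P bs)" "indepL K vs" "spanL K vs = spanL K (map P bs)"
    using filter_basisL by blast
  define Q where "Q = (\<lambda>x. x - P x)"
  have Q: "klin K Q" using P unfolding klin_def Q_def by (auto simp: algebra_simps)
  obtain ws where ws: "set ws \<subseteq> set (map Q bs)" "indepL K ws" "spanL K ws = spanL K (map Q bs)"
    using filter_basisL by blast
  have Pv: "P v = v" if "v \<in> set vs" for v using that vs(1) idem by auto
  have Pw: "P w = 0" if "w \<in> set ws" for w using that ws(1) idem klinD(1)[OF P] additive_diff[of P]
    unfolding Q_def by (auto simp: klinD(1)[OF P])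
  have mapPvs: "map P vs = vs" using Pv by (induct vs) auto
  have mapPws: "lc c (map P ws) = 0" for c
  proof -
    have "map P ws = map (\<lambda>_. 0) ws" using Pw by (induct ws) auto
    thus ?thesis by (simp add: lc_def)
  qed
  define cs where "cs = vs @ ws"
  have span_cs: "x \<in> spanL K cs" for x
  proof -
    have "P x = lc (coord K bs x) (map P bs)"
      using klin_lc[OF P, of bs "coord K bs x"] coord_exp[OF B, of x] coord_K[OF B] by simp
    hence "P x \<in> spanL K (map P bs)" unfolding spanL_def using coord_K[OF B] by auto
    hence "P x \<in> spanL K vs" using vs(3) by simp
    then obtain c1 where c1: "\<forall>i<length vs. c1 i \<in> K" "P x = lc c1 vs" unfolding spanL_def by auto
    have "Q x = lc (coord K bs x) (map Q bs)"
      using klin_lc[OF Q, of bs "coord K bs x"] coord_exp[OF B, of x] coord_K[OF B] by simp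
    hence "Q x \<in> spanL K (map Q bs)" unfolding spanL_def using coord_K[OF B] by auto
    hence "Q x \<in> spanL K ws" using ws(3) by simp
    then obtain c2 where c2: "\<forall>i<length ws. c2 i \<in> K" "Q x = lc c2 ws" unfolding spanL_def by auto
    define c where "c = (\<lambda>i. if i < length vs then c1 i else c2 (i - length vs))"
    have "lc c cs = lc c1 vs + lc c2 ws"
      unfolding cs_def lc_append by (intro arg_cong2[where f = "(+)"] lc_cong) (simp_all add: c_def)
    also have "\<dots> = x" using c1(2) c2(2) unfolding Q_def by (metis add.commute diff_add_cancel)
    finally have "x = lc c cs" by simp
    moreover have "\<forall>i<length cs. c i \<in> K" using c1 c2 unfolding c_def cs_def by auto
    ultimately show ?thesis unfolding spanL_def by blast
  qed
  have ind_cs: "indepL K cs" unfolding indepL_def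
  proof (intro allI impI)
    fix c i assume c: "\<forall>i<length cs. c i \<in> K" and z: "lc c cs = 0" and i: "i < length cs"
    define c' where "c' = (\<lambda>i. c (length vs + i))"
    have cK1: "\<forall>i<length vs. c i \<in> K" and cK2: "\<forall>i<length ws. c' i \<in> K"
      using c unfolding cs_def c'_def by auto
    have z2: "lc c vs + lc c' ws = 0" using z unfolding cs_def lc_append c'_def .
    have "P (lc c vs + lc c' ws) = lc c vs"
      using klin_lc[OF P cK1] klin_lc[OF P cK2] mapPvs mapPws klinD(1)[OF P] by simp
    hence z1: "lc c vs = 0" using z2 additive_zero[of P] klinD(1)[OF P] by metis
    hence z3: "lc c' ws = 0" using z2 by simp
    show "c i = 0"
    proof (cases "i < length vs")
      case True thus ?thesis using vs(2) cK1 z1 unfolding indepL_def by blast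
    next
      case False
      hence "i - length vs < length ws" using i unfolding cs_def by auto
      hence "c' (i - length vs) = 0" using ws(2) cK2 z3 unfolding indepL_def by blast
      thus ?thesis using False unfolding c'_def by simp
    qed
  qed
  have C: "isbasis K cs" unfolding isbasis_def using ind_cs span_cs by auto
  have "tr K bs P = tr K cs P" by (rule tr_indep[OF B C P])
  also have "\<dots> = (\<Sum>i<length cs. if i < length vs then 1 else 0)"
    unfolding tr_def
  proof (rule sum.cong)
    fix i assume "i \<in> {..<length cs}"
    hence i: "i < length cs" by simp
    show "coord K cs (P (cs ! i)) i = (if i < length vs then 1 else 0)"
    proof (cases "i < length vs")
      case True
      hence "P (cs ! i) = cs ! i" using Pv unfolding cs_def by (simp add: nth_append)
      thus ?thesis using True coord_basis[OF C i i] by simp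
    next
      case False
      hence "P (cs ! i) = 0" using Pw i unfolding cs_def by (simp add: nth_append)
      thus ?thesis using False coord_zero[OF C i] by simp
    qed
  qed simp
  also have "\<dots> = of_nat (length vs)" by (rule sum_indicator_less) (simp add: cs_def)
  finally have "tr K bs P = of_nat (length vs)" .
  moreover have "length vs > 0"
  proof (rule ccontr)
    assume "\<not> 0 < length vs"
    hence "vs = []" by simp
    moreover have "P x0 \<in> spanL K (map P bs)"
      unfolding spanL_def using klin_lc[OF P, of bs "coord K bs x0"] coord_exp[OF B, of x0] coord_K[OF B] by auto
    hence "P x0 \<in> spanL K vs" using vs(3) by simp
    ultimately show False using nz unfolding spanL_def by simp
  qed
  ultimately show ?thesis using ch by simp
qed

end


definition homog :: "('g \<Rightarrow> 'a::ring_1 \<Rightarrow> 'a) \<Rightarrow> 'g \<Rightarrow> 'a \<Rightarrow> bool" where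
  "homog cmp d z \<longleftrightarrow> (\<forall>g. cmp g z = (if g = d then z else 0))"

locale YDK =
  fixes sc :: "complex \<Rightarrow> 'a::ring_1 \<Rightarrow> 'a"
    and act cmp :: "'g::ab_group_add \<Rightarrow> 'a \<Rightarrow> 'a"
    and K :: "'a set"
  assumes YD: "YD_algebra sc act cmp"
    and CS: "central_subfield sc K"
    and INV: "invariant_set act cmp K"
    and SS: "semisimple_ring TYPE('a)"
begin

lemma
  vs: "vector_space sc"
  and sc_mult: "\<And>c x y. sc c (x * y) = sc c x * y"
  and act0: "\<And>x. act 0 x = x"
  and act_plus: "\<And>g h x. act (g + h) x = act g (act h x)"
  and act_add: "\<And>g x y. act g (x + y) = act g x + act g y"
  and cmp_add: "\<And>g x y. cmp g (x + y) = cmp g x + cmp g y"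
  and fin: "\<And>x. finite (gsupp cmp x)"
  and sum_cmp: "\<And>x. (\<Sum>g\<in>gsupp cmp x. cmp g x) = x"
  and cmp_cmp: "\<And>g h x. cmp g (cmp h x) = (if g = h then cmp g x else 0)"
  and cmp_act: "\<And>g h x. cmp g (act h x) = act h (cmp g x)"
  and act_mult: "\<And>g x y. act g (x * y) = act g x * act g y"
  and act_one: "\<And>g. act g 1 = 1"
  and cmp_mult: "\<And>k x y. cmp k (x * y) = (\<Sum>g\<in>gsupp cmp x. cmp g x * cmp (k - g) y)"
  and cmp_one: "\<And>g. cmp g 1 = (if g = 0 then 1 else 0)"
  using YD unfolding YD_algebra_def complex_algebra_def by auto

lemma K_props:
  "(1::'a) \<noteq> 0" "0 \<in> K" "1 \<in> K" "\<And>x y. x \<in> K \<Longrightarrow> y \<in> K \<Longrightarrow> x + y \<in> K"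
  "\<And>x y. x \<in> K \<Longrightarrow> y \<in> K \<Longrightarrow> x * y \<in> K" "\<And>x. x \<in> K \<Longrightarrow> - x \<in> K"
  "\<And>x. x \<in> K \<Longrightarrow> x \<noteq> 0 \<Longrightarrow> \<exists>y\<in>K. x * y = 1"
  "\<And>x a. x \<in> K \<Longrightarrow> x * a = a * x"
  using CS unfolding central_subfield_def by auto

sublocale KF K
  by (unfold_locales) (use K_props in auto)

lemma K_act: "k \<in> K \<Longrightarrow> act g k = k" and K_cmp0: "k \<in> K \<Longrightarrow> cmp 0 k = k"
  using INV unfolding invariant_set_def by auto

lemma char0: "m > 0 \<Longrightarrow> (of_nat m :: 'a) \<noteq> 0"
proof -
  interpret V: vector_space sc by (rule vs)
  have e: "sc (of_nat m) 1 = (of_nat m :: 'a)" for m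
    by (induct m) (simp_all add: V.scale_left_distrib)
  assume "m > 0"
  hence "sc (of_nat m) (1::'a) \<noteq> 0" using one_ne by (simp add: V.scale_eq_0_iff)
  thus ?thesis using e by simp
qed

lemma cmp_zero [simp]: "cmp g 0 = 0" by (rule additive_zero) (rule cmp_add)
lemma cmp_sum: "cmp g (sum f A) = (\<Sum>a\<in>A. cmp g (f a))" by (rule additive_sum) (rule cmp_add)
lemma cmp_neg: "cmp g (- x) = - cmp g x" by (rule additive_neg) (rule cmp_add)
lemma cmp_diff: "cmp g (x - y) = cmp g x - cmp g y" by (rule additive_diff) (rule cmp_add)
lemma act_zero [simp]: "act g 0 = 0" by (rule additive_zero) (rule act_add)
lemma act_sum: "act g (sum f A) = (\<Sum>a\<in>A. act g (f a))" by (rule additive_sum) (rule act_add)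

lemma gsupp_iff: "g \<in> gsupp cmp x \<longleftrightarrow> cmp g x \<noteq> 0" by (simp add: gsupp_def)

lemma homogD: "homog cmp d z \<Longrightarrow> cmp g z = (if g = d then z else 0)"
  by (simp add: homog_def)

lemma homog_gsupp: "homog cmp d z \<Longrightarrow> gsupp cmp z \<subseteq> {d}"
  by (auto simp: homog_def gsupp_def)

lemma sum_gsupp_superset:
  assumes "finite S" "gsupp cmp x \<subseteq> S" "\<And>g. F g 0 = 0"
  shows "(\<Sum>g\<in>gsupp cmp x. F g (cmp g x)) = (\<Sum>g\<in>S. F g (cmp g x))"
  by (rule sum.mono_neutral_left) (use assms in \<open>auto simp: gsupp_def\<close>)

lemma sum_gsupp_homog:
  assumes h: "homog cmp d z" and F: "\<And>g. F g 0 = 0"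
  shows "(\<Sum>g\<in>gsupp cmp z. F g (cmp g z)) = F d z"
proof -
  have "(\<Sum>g\<in>gsupp cmp z. F g (cmp g z)) = (\<Sum>g\<in>{d}. F g (cmp g z))"
    by (rule sum_gsupp_superset) (use homog_gsupp[OF h] F in auto)
  thus ?thesis using homogD[OF h, of d] by simp
qed

lemma homogI: "(\<And>g. g \<noteq> d \<Longrightarrow> cmp g z = 0) \<Longrightarrow> homog cmp d z"
proof -
  assume a: "\<And>g. g \<noteq> d \<Longrightarrow> cmp g z = 0"
  have "z = (\<Sum>g\<in>gsupp cmp z. cmp g z)" by (simp add: sum_cmp)
  also have "\<dots> = (\<Sum>g\<in>{d}. cmp g z)"
    by (rule sum_gsupp_superset) (use a in \<open>auto simp: gsupp_def\<close>)
  finally have "cmp d z = z" by simp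
  thus ?thesis using a by (auto simp: homog_def)
qed

lemma homog_cmp: "homog cmp g (cmp g x)"
  by (rule homogI) (simp add: cmp_cmp)

lemma homog_zero: "homog cmp d 0" by (simp add: homog_def)

lemma homog_add: "homog cmp d x \<Longrightarrow> homog cmp d y \<Longrightarrow> homog cmp d (x + y)"
  by (simp add: homog_def cmp_add)

lemma homog_sum: "(\<And>a. a \<in> A \<Longrightarrow> homog cmp d (f a)) \<Longrightarrow> homog cmp d (sum f A)"
  by (induct A rule: infinite_finite_induct) (auto simp: homog_zero homog_add)

lemma homog_one: "homog cmp 0 1" by (simp add: homog_def cmp_one)

lemma homog_K: "k \<in> K \<Longrightarrow> homog cmp 0 k"
  by (rule homogI) (metis K_cmp0 cmp_cmp)

lemma cmp_mult_homog_left: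
  assumes "homog cmp d x" shows "cmp k (x * y) = x * cmp (k - d) y"
  unfolding cmp_mult by (rule sum_gsupp_homog[OF assms, where F = "\<lambda>g v. v * cmp (k - g) y"]) simp

lemma homog_mult: "homog cmp d x \<Longrightarrow> homog cmp e y \<Longrightarrow> homog cmp (d + e) (x * y)"
  by (rule homogI) (auto simp: cmp_mult_homog_left homogD algebra_simps)

lemma homog_act: "homog cmp d x \<Longrightarrow> homog cmp d (act g x)"
  by (simp add: homog_def cmp_act)

lemma cmp_Kmul: "k \<in> K \<Longrightarrow> cmp g (k * x) = k * cmp g x"
  by (simp add: cmp_mult_homog_left[OF homog_K])

lemma act_Kmul: "k \<in> K \<Longrightarrow> act g (k * x) = k * act g x"
  by (simp add: act_mult K_act)

lemma klin_cmp: "klin K (cmp g)" by (simp add: klin_def cmp_add cmp_Kmul)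
lemma klin_act: "klin K (act g)" by (simp add: klin_def act_add act_Kmul)
lemma klin_L: "klin K (\<lambda>w. z * w)"
  by (simp add: klin_def distrib_left) (metis Kcomm mult.assoc)
lemma klin_R: "klin K (\<lambda>w. w * z)"
  by (simp add: klin_def distrib_right mult.assoc)

lemma gsupp_additive:
  fixes F :: "'g \<Rightarrow> 'a \<Rightarrow> 'm::ab_group_add"
  assumes F: "\<And>g x y. F g (x + y) = F g x + F g y"
  shows "(\<Sum>g\<in>gsupp cmp (x + y). F g (cmp g (x + y))) =
         (\<Sum>g\<in>gsupp cmp x. F g (cmp g x)) + (\<Sum>g\<in>gsupp cmp y. F g (cmp g y))"
proof -
  let ?S = "gsupp cmp x \<union> gsupp cmp y \<union> gsupp cmp (x + y)"
  have F0: "F g 0 = 0" for g by (rule additive_zero) (rule F)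
  have fS: "finite ?S" by (simp add: fin)
  have "(\<Sum>g\<in>gsupp cmp (x + y). F g (cmp g (x + y))) = (\<Sum>g\<in>?S. F g (cmp g (x + y)))"
    by (rule sum_gsupp_superset[where F = F, OF fS _ F0]) auto
  also have "\<dots> = (\<Sum>g\<in>?S. F g (cmp g x)) + (\<Sum>g\<in>?S. F g (cmp g y))"
    by (simp add: cmp_add F sum.distrib)
  also have "(\<Sum>g\<in>?S. F g (cmp g x)) = (\<Sum>g\<in>gsupp cmp x. F g (cmp g x))"
    by (rule sum_gsupp_superset[where F = F, OF fS _ F0, symmetric]) auto
  also have "(\<Sum>g\<in>?S. F g (cmp g y)) = (\<Sum>g\<in>gsupp cmp y. F g (cmp g y))"
    by (rule sum_gsupp_superset[where F = F, OF fS _ F0, symmetric]) auto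
  finally show ?thesis .
qed

lemma hom_sum:
  fixes F :: "'g \<Rightarrow> 'a \<Rightarrow> 'm::ab_group_add"
  assumes F: "\<And>g x y. F g (x + y) = F g x + F g y"
    and h: "\<And>j. j \<in> J \<Longrightarrow> homog cmp (\<delta> j) (Y j)"
  shows "(\<Sum>k\<in>gsupp cmp (sum Y J). F k (cmp k (sum Y J))) = (\<Sum>j\<in>J. F (\<delta> j) (Y j))"
proof -
  have F0: "F g 0 = 0" for g by (rule additive_zero) (rule F)
  have "(\<Sum>k\<in>gsupp cmp (sum Y J). F k (cmp k (sum Y J))) = (\<Sum>j\<in>J. (\<Sum>k\<in>gsupp cmp (Y j). F k (cmp k (Y j))))"
    by (rule additive_sum[where F = "\<lambda>x. \<Sum>k\<in>gsupp cmp x. F k (cmp k x)"]) (rule gsupp_additive[OF F])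
  also have "\<dots> = (\<Sum>j\<in>J. F (\<delta> j) (Y j))"
    by (rule sum.cong[OF refl]) (rule sum_gsupp_homog[where F = F, OF h F0])
  finally show ?thesis .
qed

end


context KF
begin

lemma spanL_0: "0 \<in> spanL K us"
  unfolding spanL_def using K0 by (auto intro!: exI[of _ "\<lambda>_. 0"] simp: lc_zero)

lemma spanL_add: "x \<in> spanL K us \<Longrightarrow> y \<in> spanL K us \<Longrightarrow> x + y \<in> spanL K us"
  unfolding spanL_def by (auto simp: lc_add Kadd)

lemma spanL_mul: "k \<in> K \<Longrightarrow> x \<in> spanL K us \<Longrightarrow> k * x \<in> spanL K us"
  unfolding spanL_def by (auto simp: lc_smult Kmul)

lemma spanL_mem: "u \<in> set us \<Longrightarrow> u \<in> spanL K us"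
proof -
  assume "u \<in> set us"
  then obtain j where j: "j < length us" "u = us ! j" by (auto simp: in_set_conv_nth)
  have "(\<Sum>i<length us. (if i = j then 1 else 0) * us ! i) = (\<Sum>i<length us. if i = j then us ! i else 0)"
    by (rule sum.cong) auto
  hence "u = lc (\<lambda>i. if i = j then 1 else 0) us" unfolding lc_def using j by simp
  moreover have "\<forall>i<length us. (if i = j then 1 else 0) \<in> K" using K0 K1 by simp
  ultimately show ?thesis unfolding spanL_def by blast
qed

lemma spanL_sum: "(\<And>a. a \<in> A \<Longrightarrow> f a \<in> spanL K us) \<Longrightarrow> sum f A \<in> spanL K us"
  by (induct A rule: infinite_finite_induct) (auto simp: spanL_0 spanL_add)

context fixes bs assumes B: "isbasis K bs"
begin

lemma tr_add: "klin K S \<Longrightarrow> klin K T \<Longrightarrow> tr K bs (\<lambda>w. S w + T w) = tr K bs S + tr K bs T"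
  unfolding tr_def by (simp add: coord_add[OF B] sum.distrib)

lemma tr_Kmul: "k \<in> K \<Longrightarrow> tr K bs (\<lambda>w. k * T w) = k * tr K bs T"
  unfolding tr_def by (simp add: coord_mul[OF B] sum_distrib_left)

lemma tr_K: "tr K bs T \<in> K"
  unfolding tr_def by (rule Ksum) (simp add: coord_K[OF B])

lemma tr_zero: "tr K bs (\<lambda>w. 0) = 0"
  unfolding tr_def by (simp add: coord_zero[OF B])

end
end

context YDK
begin

lemma ss_idem:
  fixes L :: "'a set"
  assumes L: "left_ideal L" and x: "x \<in> L" "x \<noteq> 0"
  shows "\<exists>e\<in>L. e \<noteq> 0 \<and> e * e = e"
proof -
  obtain L' where L': "left_ideal L'" "L \<inter> L' = {0}" "\<forall>x. \<exists>y\<in>L. \<exists>z\<in>L'. x = y + z"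
    using SS[unfolded semisimple_ring_def, rule_format, OF L] by blast
  obtain e f where ef: "e \<in> L" "f \<in> L'" "1 = e + f" using L'(3) by blast
  have Lc: "a * y \<in> L" "y + z \<in> L" "- y \<in> L" if "y \<in> L" "z \<in> L" for a y z
    using L that unfolding left_ideal_def by auto
  have L'c: "a * y \<in> L'" if "y \<in> L'" for a y
    using L'(1) that unfolding left_ideal_def by auto
  have "e * f \<in> L'" using L'c ef by auto
  moreover have "e * f = e - e * e" using ef(3) by (metis add_diff_cancel_left' distrib_left mult.right_neutral)
  moreover have "e - e * e \<in> L"
  proof -
    have "- (e * e) \<in> L" using Lc ef(1) by blast
    hence "e + - (e * e) \<in> L" using Lc ef(1) by blast
    thus ?thesis by simp
  qed
  ultimately have ee: "e * e = e" using L'(2) by (metis IntI diff_eq_diff_eq diff_self singletonD)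
  have yx: "x = x * e"
  proof -
    have "x * f \<in> L'" using L'c ef by auto
    moreover have "x * f = x - x * e" using ef(3) by (metis add_diff_cancel_left' distrib_left mult.right_neutral)
    moreover have "x - x * e \<in> L"
    proof -
      have "- (x * e) \<in> L" using Lc ef(1) x(1) by blast
      hence "x + - (x * e) \<in> L" using Lc x(1) by blast
      thus ?thesis by simp
    qed
    ultimately show ?thesis using L'(2) by (metis IntI eq_iff_diff_eq_0 singletonD)
  qed
  have "e \<noteq> 0" using yx x(2) by auto
  thus ?thesis using ee ef(1) by blast
qed


lemma hbasis_ex:
  assumes FD: "finite_dim_over K"
  shows "\<exists>bs. isbasis K bs \<and> (\<forall>i<length bs. \<exists>d. homog cmp d (bs ! i))"
proof -
  obtain S where S: "finite S" "\<forall>a. \<exists>c. (\<forall>s\<in>S. c s \<in> K) \<and> a = (\<Sum>s\<in>S. c s * s)"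
    using FD unfolding finite_dim_over_def by blast
  define HS where "HS = (\<Union>s\<in>S. (\<lambda>g. cmp g s) ` gsupp cmp s)"
  have "finite HS" unfolding HS_def using S(1) fin by auto
  then obtain us where us: "set us = HS" using finite_list by blast
  have span: "a \<in> spanL K us" for a
  proof -
    obtain c where c: "\<forall>s\<in>S. c s \<in> K" "a = (\<Sum>s\<in>S. c s * s)" using S(2) by blast
    have "a = (\<Sum>s\<in>S. c s * (\<Sum>g\<in>gsupp cmp s. cmp g s))" using c(2) by (simp add: sum_cmp)
    also have "\<dots> = (\<Sum>s\<in>S. \<Sum>g\<in>gsupp cmp s. c s * cmp g s)" by (simp add: sum_distrib_left)
    finally have a: "a = (\<Sum>s\<in>S. \<Sum>g\<in>gsupp cmp s. c s * cmp g s)" .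
    show ?thesis unfolding a
    proof (intro spanL_sum spanL_mul)
      fix s g assume "s \<in> S" "g \<in> gsupp cmp s"
      thus "c s \<in> K" using c(1) by auto
      have "cmp g s \<in> HS" unfolding HS_def using \<open>s \<in> S\<close> \<open>g \<in> gsupp cmp s\<close> by blast
      thus "cmp g s \<in> spanL K us" using us by (auto intro!: spanL_mem)
    qed
  qed
  obtain bs where bs: "set bs \<subseteq> set us" "indepL K bs" "spanL K bs = spanL K us"
    using filter_basisL by blast
  have "isbasis K bs" unfolding isbasis_def using bs span by auto
  moreover have "\<exists>d. homog cmp d (bs ! i)" if "i < length bs" for i
  proof -
    have "bs ! i \<in> HS" using that bs(1) us by (metis nth_mem subsetD)
    then obtain s g where "bs ! i = cmp g s" unfolding HS_def by blast
    thus ?thesis using homog_cmp by metis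
  qed
  ultimately show ?thesis by blast
qed

end


locale YDB = YDK +
  fixes bs :: "'a::ring_1 list"
  assumes B: "isbasis K bs" and Bh: "\<forall>i<length bs. \<exists>d. homog cmp d (bs ! i)"
begin

definition deg where "deg i = (SOME d. homog cmp d (bs ! i))"
definition tau where "tau z = tr K bs (\<lambda>w. z * w)"

lemma deg: "i < length bs \<Longrightarrow> homog cmp (deg i) (bs ! i)"
  unfolding deg_def using Bh by (metis someI_ex)

lemma tau_add: "tau (x + y) = tau x + tau y"
proof -
  have eq: "(\<lambda>w. (x + y) * w) = (\<lambda>w. x * w + y * w)" by (simp add: fun_eq_iff distrib_right)
  show ?thesis unfolding tau_def by (simp only: eq) (rule tr_add[OF B klin_L klin_L])
qed

lemma tau_Kmul: "k \<in> K \<Longrightarrow> tau (k * z) = k * tau z"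
proof -
  assume k: "k \<in> K"
  have eq: "(\<lambda>w. (k * z) * w) = (\<lambda>w. k * (z * w))" by (simp add: fun_eq_iff mult.assoc)
  show ?thesis unfolding tau_def by (simp only: eq) (rule tr_Kmul[OF B k])
qed

lemma tau_K: "tau z \<in> K" unfolding tau_def by (rule tr_K[OF B])

lemma tau_comm: "tau (x * y) = tau (y * x)"
proof -
  have eq: "(\<lambda>w. (x * y) * w) = (\<lambda>w. x * (y * w))" "(\<lambda>w. (y * x) * w) = (\<lambda>w. y * (x * w))"
    by (simp_all add: fun_eq_iff mult.assoc)
  show ?thesis unfolding tau_def by (simp only: eq) (rule tr_comm[OF B klin_L klin_L])
qed

lemma tau_zero [simp]: "tau 0 = 0" by (rule additive_zero) (rule tau_add)
lemma tau_neg: "tau (- x) = - tau x" by (rule additive_neg) (rule tau_add)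
lemma tau_sum: "tau (sum f A) = (\<Sum>a\<in>A. tau (f a))" by (rule additive_sum) (rule tau_add)

lemma tau_nd:
  assumes x: "\<And>y. tau (x * y) = 0" shows "x = 0"
proof (rule ccontr)
  assume x0: "x \<noteq> 0"
  define L where "L = {x. \<forall>y. tau (x * y) = 0}"
  have Lm: "y \<in> L \<longleftrightarrow> (\<forall>v. tau (y * v) = 0)" for y unfolding L_def by simp
  have LI: "left_ideal L" unfolding left_ideal_def
  proof (intro conjI)
    show "0 \<in> L" using Lm by simp
    show "\<forall>y\<in>L. \<forall>z\<in>L. y + z \<in> L" using Lm by (simp add: distrib_right tau_add)
    show "\<forall>y\<in>L. - y \<in> L" using Lm by (simp add: tau_neg)
    show "\<forall>a. \<forall>y\<in>L. a * y \<in> L"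
    proof (intro allI ballI)
      fix a y assume "y \<in> L"
      hence y: "\<And>v. tau (y * v) = 0" using Lm by simp
      have "tau ((a * y) * w) = 0" for w
      proof -
        have "tau ((a * y) * w) = tau (a * (y * w))" by (simp add: mult.assoc)
        also have "\<dots> = tau ((y * w) * a)" by (rule tau_comm)
        also have "\<dots> = 0" using y by (simp add: mult.assoc)
        finally show ?thesis .
      qed
      thus "a * y \<in> L" using Lm by simp
    qed
  qed
  have "x \<in> L" using x unfolding L_def by simp
  then obtain e where e: "e \<in> L" "e \<noteq> 0" "e * e = e" using ss_idem[OF LI _ x0] by blast
  have "tau e = 0" using e(1) unfolding L_def by (metis (mono_tags) mem_Collect_eq mult.right_neutral)
  moreover have "tau e \<noteq> 0" unfolding tau_def
  proof (rule tr_idem[OF B klin_L, of e 1])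
    show "e * (e * x) = e * x" for x using e(3) by (simp add: mult.assoc[symmetric])
    show "e * 1 \<noteq> 0" using e(2) by simp
    show "0 < m \<Longrightarrow> of_nat m \<noteq> (0::'a)" for m by (rule char0)
  qed
  ultimately show False by simp
qed

lemma coord_homog:
  assumes h: "homog cmp g x" and i: "i < length bs" and d: "deg i \<noteq> g"
  shows "coord K bs x i = 0"
proof -
  define c where "c = (\<lambda>j. if deg j = g then coord K bs x j else 0)"
  have "x = cmp g x" using homogD[OF h, of g] by simp
  also have "\<dots> = cmp g (\<Sum>j<length bs. coord K bs x j * bs ! j)"
    using coord_exp[OF B, of x] by (simp add: lc_def)
  also have "\<dots> = (\<Sum>j<length bs. coord K bs x j * cmp g (bs ! j))"
    by (simp add: cmp_sum cmp_Kmul coord_K[OF B])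
  also have "\<dots> = lc c bs" unfolding lc_def c_def
    by (rule sum.cong) (simp_all add: homogD[OF deg] eq_commute)
  finally have "coord K bs x i = c i"
    by (intro coord_unique[OF B _ _ i]) (auto simp: c_def coord_K[OF B] K0)
  thus ?thesis using d by (simp add: c_def)
qed

lemma tau_homog:
  assumes h: "homog cmp g y" and g: "g \<noteq> 0" shows "tau y = 0"
  unfolding tau_def tr_def
proof (rule sum.neutral, intro ballI)
  fix i assume "i \<in> {..<length bs}"
  hence i: "i < length bs" by simp
  show "coord K bs (y * bs ! i) i = 0"
    by (rule coord_homog[OF homog_mult[OF h deg[OF i]] i]) (use g in simp)
qed

lemma tau_cmp0: "tau x = tau (cmp 0 x)"
proof -
  have "tau x = tau (\<Sum>g\<in>gsupp cmp x. cmp g x)" by (simp add: sum_cmp)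
  also have "\<dots> = (\<Sum>g\<in>gsupp cmp x. tau (cmp g x))" by (rule tau_sum)
  also have "\<dots> = (\<Sum>g\<in>gsupp cmp x. (\<lambda>g v. if g = 0 then tau v else 0) g (cmp g x))"
    by (rule sum.cong) (auto simp: tau_homog[OF homog_cmp])
  also have "\<dots> = (\<Sum>g\<in>gsupp cmp x \<union> {0}. (\<lambda>g v. if g = 0 then tau v else 0) g (cmp g x))"
    by (rule sum_gsupp_superset) (auto simp: fin)
  also have "\<dots> = tau (cmp 0 x)" by (simp add: fin)
  finally show ?thesis .
qed

lemma cmp0_mult_homog:
  assumes h: "homog cmp d b" shows "cmp 0 (u * b) = cmp (- d) u * b"
proof -
  have "cmp 0 (u * b) = (\<Sum>g\<in>gsupp cmp u. (\<lambda>g v. if g = - d then v * b else 0) g (cmp g u))"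
    unfolding cmp_mult by (rule sum.cong) (auto simp: homogD[OF h] minus_equation_iff)
  also have "\<dots> = (\<Sum>g\<in>gsupp cmp u \<union> {- d}. (\<lambda>g v. if g = - d then v * b else 0) g (cmp g u))"
    by (rule sum_gsupp_superset) (auto simp: fin)
  also have "\<dots> = cmp (- d) u * b" by (simp add: fin)
  finally show ?thesis .
qed

end


context YDB
begin

definition psi where "psi x = (\<Sum>j<length bs. tau (x * bs ! j) * bs ! j)"

lemma psi_add: "psi (x + y) = psi x + psi y"
  unfolding psi_def by (simp add: distrib_right tau_add sum.distrib)

lemma Kmul_left_comm: "k \<in> K \<Longrightarrow> z * (k * y) = k * (z * y)"
  by (metis Kcomm mult.assoc)

lemma psi_Kmul: "k \<in> K \<Longrightarrow> psi (k * x) = k * psi x"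
  unfolding psi_def by (simp add: mult.assoc tau_Kmul sum_distrib_left)

lemma tau_lc: "(\<forall>j<length bs. c j \<in> K) \<Longrightarrow> tau (z * lc c bs) = (\<Sum>j<length bs. c j * tau (z * bs ! j))"
proof -
  assume c: "\<forall>j<length bs. c j \<in> K"
  have "tau (z * lc c bs) = (\<Sum>j<length bs. tau (z * (c j * bs ! j)))"
    unfolding lc_def by (simp add: sum_distrib_left tau_sum)
  also have "\<dots> = (\<Sum>j<length bs. c j * tau (z * bs ! j))"
  proof (rule sum.cong[OF refl])
    fix j assume "j \<in> {..<length bs}"
    hence cj: "c j \<in> K" using c by simp
    show "tau (z * (c j * bs ! j)) = c j * tau (z * bs ! j)"
      by (simp add: Kmul_left_comm[OF cj] tau_Kmul[OF cj])
  qed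
  finally show ?thesis .
qed

lemma psi_inj: "psi x = 0 \<Longrightarrow> x = 0"
proof -
  assume p: "psi x = 0"
  have z: "tau (x * bs ! j) = 0" if j: "j < length bs" for j
    using indepD[OF B, of "\<lambda>j. tau (x * bs ! j)" j] p j tau_K unfolding psi_def lc_def by simp
  show "x = 0"
  proof (rule tau_nd)
    fix y
    have "tau (x * y) = tau (x * lc (coord K bs y) bs)" using coord_exp[OF B, of y] by simp
    also have "\<dots> = 0" using z by (simp add: tau_lc coord_K[OF B])
    finally show "tau (x * y) = 0" .
  qed
qed

lemma psi_eq: "psi x = psi y \<Longrightarrow> x = y"
  using psi_inj[of "x - y"] additive_diff[of psi x y] psi_add by simp

lemma dual_ex: 
  assumes i: "i < length bs"
  shows "\<exists>v. homog cmp (- deg i) v \<and> (\<forall>j<length bs. tau (v * bs ! j) = (if i = j then 1 else 0))"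
proof -
  have "\<exists>u. psi u = bs ! i"
    by (rule inj_surjL[of bs psi]) (use B psi_add psi_Kmul psi_inj in \<open>auto simp: isbasis_def\<close>)
  then obtain u where u: "psi u = bs ! i" by blast
  have tu: "tau (u * bs ! j) = (if i = j then 1 else 0)" if j: "j < length bs" for j
  proof -
    have "coord K bs (psi u) j = tau (u * bs ! j)"
      by (rule coord_unique[OF B _ _ j]) (auto simp: tau_K psi_def lc_def)
    thus ?thesis using u coord_basis[OF B j i] by (simp add: eq_commute)
  qed
  define v where "v = cmp (- deg i) u"
  have "tau (v * bs ! j) = (if i = j then 1 else 0)" if j: "j < length bs" for j
  proof -
    have "tau (v * bs ! j) = tau (cmp (- deg j) v * bs ! j)"
      by (simp add: tau_cmp0[of "v * bs ! j"] cmp0_mult_homog[OF deg[OF j]])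
    also have "\<dots> = (if deg j = deg i then tau (cmp (- deg j) u * bs ! j) else 0)"
      by (simp add: v_def cmp_cmp)
    also have "\<dots> = (if i = j then 1 else 0)"
    proof (cases "deg j = deg i")
      case True
      have "tau (cmp (- deg j) u * bs ! j) = tau (u * bs ! j)"
        by (simp add: tau_cmp0[of "u * bs ! j"] cmp0_mult_homog[OF deg[OF j]])
      thus ?thesis using True tu[OF j] by simp
    next
      case False thus ?thesis by auto
    qed
    finally show ?thesis .
  qed
  moreover have "homog cmp (- deg i) v" unfolding v_def by (rule homog_cmp)
  ultimately show ?thesis by blast
qed

definition dv where "dv i = (SOME v. homog cmp (- deg i) v \<and> (\<forall>j<length bs. tau (v * bs ! j) = (if i = j then 1 else 0)))"

lemma dv: assumes "i < length bs"
  shows "homog cmp (- deg i) (dv i)" "\<And>j. j < length bs \<Longrightarrow> tau (dv i * bs ! j) = (if i = j then 1 else 0)"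
  using someI_ex[OF dual_ex[OF assms]] unfolding dv_def by blast+

lemma psi_dv: "i < length bs \<Longrightarrow> psi (dv i) = bs ! i"
proof -
  assume i: "i < length bs"
  have "psi (dv i) = (\<Sum>j<length bs. (if i = j then bs ! j else 0))"
    unfolding psi_def by (rule sum.cong) (auto simp: dv(2)[OF i])
  thus ?thesis using i by simp
qed

lemma dual_exp: "y = (\<Sum>i<length bs. tau (y * bs ! i) * dv i)"
proof (rule psi_eq)
  have "psi (\<Sum>i<length bs. tau (y * bs ! i) * dv i) = (\<Sum>i<length bs. psi (tau (y * bs ! i) * dv i))"
    by (rule additive_sum) (rule psi_add)
  also have "\<dots> = (\<Sum>i<length bs. tau (y * bs ! i) * bs ! i)"
    by (rule sum.cong) (simp_all add: psi_Kmul tau_K psi_dv)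
  also have "\<dots> = psi y" by (simp add: psi_def)
  finally show "psi y = psi (\<Sum>i<length bs. tau (y * bs ! i) * dv i)" by simp
qed

lemma coord_tau: "i < length bs \<Longrightarrow> coord K bs y i = tau (dv i * y)"
proof -
  assume i: "i < length bs"
  have "tau (dv i * y) = tau (dv i * lc (coord K bs y) bs)" using coord_exp[OF B, of y] by simp
  also have "\<dots> = (\<Sum>j<length bs. coord K bs y j * tau (dv i * bs ! j))" by (simp add: tau_lc coord_K[OF B])
  also have "\<dots> = (\<Sum>j<length bs. if i = j then coord K bs y j else 0)"
    by (rule sum.cong) (simp_all add: dv(2)[OF i])
  also have "\<dots> = coord K bs y i" using i by simp
  finally show ?thesis by simp
qed

lemma Cas:
  fixes \<Phi> :: "'a \<Rightarrow> 'a \<Rightarrow> 'm::ab_group_add"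
  assumes A1: "\<And>a a' b. \<Phi> (a + a') b = \<Phi> a b + \<Phi> a' b"
    and A2: "\<And>a b b'. \<Phi> a (b + b') = \<Phi> a b + \<Phi> a b'"
    and Bal: "\<And>k a b. k \<in> K \<Longrightarrow> \<Phi> (k * a) b = \<Phi> a (k * b)"
  shows "(\<Sum>i<length bs. \<Phi> (x * dv i) (bs ! i)) = (\<Sum>i<length bs. \<Phi> (dv i) (bs ! i * x))"
proof -
  let ?n = "length bs"
  have S1: "\<Phi> (sum f A) b = (\<Sum>a\<in>A. \<Phi> (f a) b)" for f A b
    by (rule additive_sum[where F = "\<lambda>a. \<Phi> a b"]) (rule A1)
  have S2: "\<Phi> a (sum f A) = (\<Sum>b\<in>A. \<Phi> a (f b))" for f A a
    by (rule additive_sum[where F = "\<lambda>b. \<Phi> a b"]) (rule A2)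
  have "(\<Sum>i<?n. \<Phi> (dv i) (bs ! i * x)) = (\<Sum>i<?n. \<Sum>j<?n. \<Phi> (dv i) (coord K bs (bs ! i * x) j * bs ! j))"
    by (rule sum.cong[OF refl]) (subst coord_exp[OF B, of "bs ! _ * x"], simp add: lc_def S2)
  also have "\<dots> = (\<Sum>i<?n. \<Sum>j<?n. \<Phi> (coord K bs (bs ! i * x) j * dv i) (bs ! j))"
    by (intro sum.cong refl) (simp add: Bal coord_K[OF B])
  also have "\<dots> = (\<Sum>j<?n. \<Phi> (\<Sum>i<?n. coord K bs (bs ! i * x) j * dv i) (bs ! j))"
    by (subst sum.swap) (simp add: S1)
  also have "\<dots> = (\<Sum>j<?n. \<Phi> (x * dv j) (bs ! j))"
  proof (rule sum.cong[OF refl])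
    fix j assume "j \<in> {..<?n}"
    hence j: "j < ?n" by simp
    have "(\<Sum>i<?n. coord K bs (bs ! i * x) j * dv i) = (\<Sum>i<?n. tau ((x * dv j) * bs ! i) * dv i)"
    proof (rule sum.cong[OF refl])
      fix i
      have "coord K bs (bs ! i * x) j = tau (dv j * (bs ! i * x))" by (rule coord_tau[OF j])
      also have "\<dots> = tau (x * (dv j * bs ! i))" by (metis tau_comm mult.assoc)
      finally show "coord K bs (bs ! i * x) j * dv i = tau ((x * dv j) * bs ! i) * dv i"
        by (simp add: mult.assoc)
    qed
    also have "\<dots> = x * dv j" by (rule dual_exp[symmetric])
    finally show "\<Phi> (\<Sum>i<?n. coord K bs (bs ! i * x) j * dv i) (bs ! j) = \<Phi> (x * dv j) (bs ! j)" by simp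
  qed
  finally show ?thesis by simp
qed

end


context YDB
begin

definition cc where "cc = (\<Sum>i<length bs. dv i * bs ! i)"

lemma cc_central: "x * cc = cc * x"
proof -
  have "(\<Sum>i<length bs. (x * dv i) * bs ! i) = (\<Sum>i<length bs. dv i * (bs ! i * x))"
    by (rule Cas) (simp_all add: distrib_left distrib_right Kmul_left_comm mult.assoc)
  thus ?thesis unfolding cc_def by (simp add: sum_distrib_left sum_distrib_right mult.assoc)
qed

lemma cc_homog: "homog cmp 0 cc"
  unfolding cc_def
proof (rule homog_sum)
  fix i assume "i \<in> {..<length bs}"
  hence i: "i < length bs" by simp
  show "homog cmp 0 (dv i * bs ! i)" using homog_mult[OF dv(1)[OF i] deg[OF i]] by simp
qed

lemma tau_cc: "tau (cc * z) = tr K bs (\<lambda>w. w * z)"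
proof -
  have "tau (cc * z) = (\<Sum>i<length bs. tau (dv i * (bs ! i * z)))"
    unfolding cc_def by (simp add: sum_distrib_right tau_sum mult.assoc)
  also have "\<dots> = tr K bs (\<lambda>w. w * z)"
    unfolding tr_def by (rule sum.cong) (simp_all add: coord_tau)
  finally show ?thesis .
qed

lemma cc_inj: "cc * y = 0 \<Longrightarrow> y = 0"
proof (rule ccontr)
  assume y: "cc * y = 0" "y \<noteq> 0"
  define L where "L = {y. cc * y = 0}"
  have LI: "left_ideal L" unfolding left_ideal_def L_def
    by (auto simp: distrib_left) (metis cc_central mult.assoc mult_zero_right)
  obtain e where e: "e \<in> L" "e \<noteq> 0" "e * e = e" using ss_idem[OF LI _ y(2)] y(1) unfolding L_def by auto
  have "tr K bs (\<lambda>w. w * e) = 0" using tau_cc[of e] e(1) unfolding L_def by simp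
  moreover have "tr K bs (\<lambda>w. w * e) \<noteq> 0"
  proof (rule tr_idem[OF B klin_R, of e 1])
    show "x * e * e = x * e" for x using e(3) by (simp add: mult.assoc)
    show "1 * e \<noteq> 0" using e(2) by simp
    show "0 < m \<Longrightarrow> of_nat m \<noteq> (0::'a)" for m by (rule char0)
  qed
  ultimately show False by simp
qed

lemma cc_inv_ex: "\<exists>w. cc * w = 1"
  by (rule inj_surjL[of bs "\<lambda>y. cc * y"])
     (use B cc_inj in \<open>auto simp: isbasis_def distrib_left Kmul_left_comm\<close>)

definition winv where "winv = (SOME w. cc * w = 1)"

lemma winv_r: "cc * winv = 1" unfolding winv_def by (rule someI_ex[OF cc_inv_ex])
lemma winv_l: "winv * cc = 1" using winv_r cc_central by simp

lemma winv_central: "x * winv = winv * x"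
proof -
  have "x * winv = (winv * cc) * x * winv" by (simp add: winv_l)
  also have "\<dots> = winv * (x * cc) * winv" by (metis cc_central mult.assoc)
  also have "\<dots> = winv * x * (cc * winv)" by (simp add: mult.assoc)
  finally show ?thesis by (simp add: winv_r)
qed

lemma winv_homog: "homog cmp 0 winv"
proof -
  have "cmp g winv = 0" if g: "g \<noteq> 0" for g
  proof -
    have "cc * cmp g winv = cmp g (cc * winv)"
      by (simp add: cmp_mult_homog_left[OF cc_homog])
    also have "\<dots> = 0" using g by (simp add: winv_r cmp_one)
    finally have "cc * cmp g winv = 0" .
    thus "cmp g winv = 0" by (rule cc_inj)
  qed
  thus ?thesis by (rule homogI)
qed

definition U where "U i = winv * dv i"

lemma U_homog: "i < length bs \<Longrightarrow> homog cmp (- deg i) (U i)"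
  unfolding U_def using homog_mult[OF winv_homog dv(1)] by simp

lemma U_sum: "(\<Sum>i<length bs. U i * bs ! i) = 1"
  unfolding U_def by (simp add: mult.assoc sum_distrib_left[symmetric] cc_def[symmetric] winv_l)

lemma CasU:
  fixes \<Phi> :: "'a \<Rightarrow> 'a \<Rightarrow> 'm::ab_group_add"
  assumes A1: "\<And>a a' b. \<Phi> (a + a') b = \<Phi> a b + \<Phi> a' b"
    and A2: "\<And>a b b'. \<Phi> a (b + b') = \<Phi> a b + \<Phi> a b'"
    and Bal: "\<And>k a b. k \<in> K \<Longrightarrow> \<Phi> (k * a) b = \<Phi> a (k * b)"
  shows "(\<Sum>i<length bs. \<Phi> (x * U i) (bs ! i)) = (\<Sum>i<length bs. \<Phi> (U i) (bs ! i * x))"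
proof -
  have "(\<Sum>i<length bs. \<Phi> (winv * (x * dv i)) (bs ! i)) = (\<Sum>i<length bs. \<Phi> (winv * dv i) (bs ! i * x))"
  proof (rule Cas[where \<Phi> = "\<lambda>a b. \<Phi> (winv * a) b"])
    show "\<Phi> (winv * (a + a')) b = \<Phi> (winv * a) b + \<Phi> (winv * a') b" for a a' b by (simp add: distrib_left A1)
    show "\<Phi> (winv * a) (b + b') = \<Phi> (winv * a) b + \<Phi> (winv * a) b'" for a b b' by (rule A2)
    show "\<Phi> (winv * (k * a)) b = \<Phi> (winv * a) (k * b)" if "k \<in> K" for k a b
      using Bal[OF that] Kmul_left_comm[OF that] by simp
  qed
  thus ?thesis unfolding U_def by (simp add: mult.assoc[symmetric] winv_central)
qed

end


context YDK
begin

lemma bop_one_right: "bop act cmp a 1 = a"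
  unfolding bop_def by (simp add: act_one sum_cmp)

lemma bop_homog: "homog cmp d z \<Longrightarrow> bop act cmp z y = act d y * z"
  unfolding bop_def by (rule sum_gsupp_homog[where F = "\<lambda>h v. act h y * v"]) simp_all

lemma bop_one_left: "bop act cmp 1 y = y"
  using bop_homog[OF homog_one] by (simp add: act0)

lemma bop_K: "k \<in> K \<Longrightarrow> bop act cmp a k = k * a"
  unfolding bop_def by (simp add: K_act sum_distrib_left[symmetric] sum_cmp)

context
  fixes rho :: "'m::ab_group_add \<Rightarrow> 'a \<Rightarrow> 'a \<Rightarrow> 'm"
  assumes RM: "is_rmod act cmp K rho"
begin

lemma rho_add1: "rho (n + n') a b = rho n a b + rho n' a b"
  and rho_add2: "rho n (a + a') b = rho n a b + rho n a' b"
  and rho_add3: "rho n a (b + b') = rho n a b + rho n a b'"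
  and rho_bal0: "k \<in> K \<Longrightarrow> rho n (bop act cmp a k) b = rho n a (k * b)"
  and rho_unit: "rho n 1 1 = n"
  and rho_assoc: "rho (rho n a b) a' b' = (\<Sum>g\<in>gsupp cmp b. rho n (bop act cmp a (act g a')) (cmp g b * b'))"
  using RM unfolding is_rmod_def by auto

lemma rho_bal: "k \<in> K \<Longrightarrow> rho n (k * a) b = rho n a (k * b)"
  using rho_bal0 bop_K by metis

lemma rho_zero3 [simp]: "rho n a 0 = 0"
  by (rule additive_zero[where F = "rho n a"]) (rule rho_add3)

lemma rho_sum1: "rho (sum f A) a b = (\<Sum>x\<in>A. rho (f x) a b)"
  by (rule additive_sum[where F = "\<lambda>n. rho n a b"]) (rule rho_add1)

lemma rho_sum3: "rho n a (sum f A) = (\<Sum>x\<in>A. rho n a (f x))"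
  by (rule additive_sum[where F = "rho n a"]) (rule rho_add3)

lemma rho_assoc_1x: "rho (rho n a b) 1 x = rho n a (b * x)"
proof -
  have "rho (rho n a b) 1 x = (\<Sum>g\<in>gsupp cmp b. rho n a (cmp g b * x))"
    by (simp add: rho_assoc act_one bop_one_right)
  also have "\<dots> = rho n a ((\<Sum>g\<in>gsupp cmp b. cmp g b) * x)"
    by (simp add: rho_sum3 sum_distrib_right)
  finally show ?thesis by (simp add: sum_cmp)
qed

lemma rho_assoc_homog: "homog cmp d b \<Longrightarrow> rho (rho n a b) x 1 = rho n (bop act cmp a (act d x)) b"
proof -
  assume h: "homog cmp d b"
  have "(\<Sum>g\<in>gsupp cmp b. rho n (bop act cmp a (act g x)) (cmp g b * 1)) =
        (\<lambda>g v. rho n (bop act cmp a (act g x)) (v * 1)) d b"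
    by (rule sum_gsupp_homog[OF h]) simp
  thus ?thesis unfolding rho_assoc by simp
qed

lemma inv_mult:
  assumes z: "\<And>x. rho z x 1 = rho z 1 x"
  shows "rho z x y = rho z 1 (x * y)"
proof -
  have "rho (rho z x 1) 1 y = rho z x y" by (simp add: rho_assoc_1x)
  moreover have "rho (rho z 1 x) 1 y = rho z 1 (x * y)" by (simp add: rho_assoc_1x)
  ultimately show ?thesis using z by simp
qed

end
end


context YDB
begin

definition EE where "EE rho n = (\<Sum>i<length bs. rho n (U i) (bs ! i))"

lemma E_inv:
  fixes rho :: "'m::ab_group_add \<Rightarrow> 'a \<Rightarrow> 'a \<Rightarrow> 'm"
  assumes RM: "is_rmod act cmp K rho"
  shows "rho (EE rho n) x 1 = rho (EE rho n) 1 x"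
proof -
  have "rho (EE rho n) x 1 = (\<Sum>i<length bs. rho (rho n (U i) (bs ! i)) x 1)"
    unfolding EE_def by (rule rho_sum1[OF RM])
  also have "\<dots> = (\<Sum>i<length bs. rho n (x * U i) (bs ! i))"
  proof (rule sum.cong[OF refl])
    fix i assume "i \<in> {..<length bs}"
    hence i: "i < length bs" by simp
    have "act (- deg i) (act (deg i) x) = x" by (simp add: act_plus[symmetric] act0)
    thus "rho (rho n (U i) (bs ! i)) x 1 = rho n (x * U i) (bs ! i)"
      by (simp add: rho_assoc_homog[OF RM deg[OF i]] bop_homog[OF U_homog[OF i]])
  qed
  also have "\<dots> = (\<Sum>i<length bs. rho n (U i) (bs ! i * x))"
    by (rule CasU) (simp_all add: rho_add2[OF RM] rho_add3[OF RM] rho_bal[OF RM])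
  also have "\<dots> = (\<Sum>i<length bs. rho (rho n (U i) (bs ! i)) 1 x)"
    by (simp add: rho_assoc_1x[OF RM])
  also have "\<dots> = rho (EE rho n) 1 x"
    unfolding EE_def by (rule rho_sum1[OF RM, symmetric])
  finally show ?thesis .
qed

lemma E_fix:
  fixes rho :: "'m::ab_group_add \<Rightarrow> 'a \<Rightarrow> 'a \<Rightarrow> 'm"
  assumes RM: "is_rmod act cmp K rho" and z: "\<And>x. rho z x 1 = rho z 1 x"
  shows "EE rho z = z"
proof -
  have "EE rho z = (\<Sum>i<length bs. rho z 1 (U i * bs ! i))"
    unfolding EE_def by (rule sum.cong[OF refl]) (rule inv_mult[OF RM z])
  also have "\<dots> = rho z 1 1" by (simp add: rho_sum3[OF RM, symmetric] U_sum)
  finally show ?thesis by (simp add: rho_unit[OF RM])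
qed

lemma E_hom:
  assumes p: "rhom rho rho' p"
  shows "p (EE rho n) = EE rho' (p n)"
proof -
  have padd: "p (x + y) = p x + p y" for x y using p unfolding rhom_def by auto
  have "p (EE rho n) = (\<Sum>i<length bs. p (rho n (U i) (bs ! i)))"
    unfolding EE_def by (rule additive_sum) (rule padd)
  also have "\<dots> = EE rho' (p n)" unfolding EE_def using p unfolding rhom_def by simp
  finally show ?thesis .
qed

end


context YDK
begin

lemma ra_def': "reg_action act cmp m a b = (\<Sum>g\<in>gsupp cmp m. (\<lambda>g v. act g a * v * b) g (cmp g m))"
  by (simp add: reg_action_def)

lemma ra_assoc:
  "reg_action act cmp (reg_action act cmp m a b) a' b' =
     (\<Sum>l\<in>gsupp cmp b. reg_action act cmp m (bop act cmp a (act l a')) (cmp l b * b'))"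
proof -
  let ?J = "gsupp cmp m \<times> (gsupp cmp a \<times> gsupp cmp b)"
  define Y where "Y = (\<lambda>(g, h, l). act g (cmp h a) * cmp g m * cmp l b)"
  define \<delta> where "\<delta> = (\<lambda>(g::'g, h::'g, l::'g). h + g + l)"
  have X: "reg_action act cmp m a b = sum Y ?J"
  proof -
    have "reg_action act cmp m a b =
          (\<Sum>g\<in>gsupp cmp m. act g (\<Sum>h\<in>gsupp cmp a. cmp h a) * cmp g m * (\<Sum>l\<in>gsupp cmp b. cmp l b))"
      by (simp add: reg_action_def sum_cmp)
    also have "\<dots> = (\<Sum>g\<in>gsupp cmp m. \<Sum>l\<in>gsupp cmp b. \<Sum>h\<in>gsupp cmp a. act g (cmp h a) * cmp g m * cmp l b)"
      by (simp add: act_sum sum_distrib_left sum_distrib_right)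
    also have "\<dots> = (\<Sum>g\<in>gsupp cmp m. \<Sum>h\<in>gsupp cmp a. \<Sum>l\<in>gsupp cmp b. act g (cmp h a) * cmp g m * cmp l b)"
      by (rule sum.cong[OF refl]) (rule sum.swap)
    also have "\<dots> = sum Y ?J"
      by (simp add: Y_def sum.cartesian_product)
    finally show ?thesis .
  qed
  have hY: "homog cmp (\<delta> j) (Y j)" if "j \<in> ?J" for j
  proof -
    obtain g h l where j: "j = (g, h, l)" by (cases j) auto
    show ?thesis unfolding j Y_def \<delta>_def
      by (simp, intro homog_mult homog_act homog_cmp)
  qed
  have "reg_action act cmp (reg_action act cmp m a b) a' b' = reg_action act cmp (sum Y ?J) a' b'"
    by (simp only: X)
  also have "\<dots> = (\<Sum>j\<in>?J. act (\<delta> j) a' * Y j * b')"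
    unfolding reg_action_def[where m = "sum Y ?J"]
    by (rule hom_sum[where F = "\<lambda>g v. act g a' * v * b'"]) (simp_all add: distrib_left distrib_right hY)
  also have "\<dots> = (\<Sum>g\<in>gsupp cmp m. \<Sum>h\<in>gsupp cmp a. \<Sum>l\<in>gsupp cmp b.
                     act (h + g + l) a' * (act g (cmp h a) * cmp g m * cmp l b) * b')"
    unfolding sum.cartesian_product by (rule sum.cong[OF refl]) (auto simp: Y_def \<delta>_def split: prod.splits)
  also have "\<dots> = (\<Sum>g\<in>gsupp cmp m. \<Sum>l\<in>gsupp cmp b. \<Sum>h\<in>gsupp cmp a.
                     act (h + g + l) a' * (act g (cmp h a) * cmp g m * cmp l b) * b')"
    by (rule sum.cong[OF refl]) (rule sum.swap)
  also have "\<dots> = (\<Sum>l\<in>gsupp cmp b. \<Sum>g\<in>gsupp cmp m. \<Sum>h\<in>gsupp cmp a.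
                     act (h + g + l) a' * (act g (cmp h a) * cmp g m * cmp l b) * b')"
    by (rule sum.swap)
  also have "\<dots> = (\<Sum>l\<in>gsupp cmp b. \<Sum>g\<in>gsupp cmp m. \<Sum>h\<in>gsupp cmp a.
                     act (g + (h + l)) a' * act g (cmp h a) * cmp g m * (cmp l b * b'))"
    by (intro sum.cong refl) (simp add: mult.assoc add.commute add.left_commute)
  also have "\<dots> = (\<Sum>l\<in>gsupp cmp b. reg_action act cmp m (bop act cmp a (act l a')) (cmp l b * b'))"
    by (simp add: reg_action_def bop_def act_sum act_mult act_plus sum_distrib_right)
  finally show ?thesis .
qed

lemma reg_rmod: "is_rmod act cmp K (reg_action act cmp)"
  unfolding is_rmod_def
proof (intro conjI allI ballI)
  fix n n' a b
  show "reg_action act cmp (n + n') a b = reg_action act cmp n a b + reg_action act cmp n' a b"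
    unfolding ra_def' by (rule gsupp_additive) (simp add: distrib_left distrib_right)
next
  fix n a a' b
  show "reg_action act cmp n (a + a') b = reg_action act cmp n a b + reg_action act cmp n a' b"
    by (simp add: reg_action_def act_add distrib_right sum.distrib)
next
  fix n a b b'
  show "reg_action act cmp n a (b + b') = reg_action act cmp n a b + reg_action act cmp n a b'"
    by (simp add: reg_action_def distrib_left sum.distrib)
next
  fix n a b k assume k: "k \<in> K"
  show "reg_action act cmp n (bop act cmp a k) b = reg_action act cmp n a (k * b)"
    unfolding reg_action_def bop_K[OF k] act_Kmul[OF k]
    by (rule sum.cong[OF refl]) (metis Kcomm[OF k] mult.assoc)
next
  fix n
  show "reg_action act cmp n 1 1 = n" by (simp add: reg_action_def act_one sum_cmp)
next
  fix n a b a' b'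
  show "reg_action act cmp (reg_action act cmp n a b) a' b' =
        (\<Sum>g\<in>gsupp cmp b. reg_action act cmp n (bop act cmp a (act g a')) (cmp g b * b'))"
    by (rule ra_assoc)
qed

end


context YDK
begin
lemma ra_one_left: "reg_action act cmp 1 x y = x * y"
proof -
  have "reg_action act cmp 1 x y = (\<lambda>g v. act g x * v * y) 0 1"
    unfolding reg_action_def by (rule sum_gsupp_homog[OF homog_one]) simp
  thus ?thesis by (simp add: act0)
qed
end

theorem lemma6p2:
  fixes sc :: "complex \<Rightarrow> 'a::ring_1 \<Rightarrow> 'a"
    and act cmp :: "'g::ab_group_add \<Rightarrow> 'a \<Rightarrow> 'a"
    and K :: "'a set"
  assumes "YD_algebra sc act cmp"
    and "semisimple_ring TYPE('a)"
    and "central_subfield sc K"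
    and "invariant_set act cmp K"
    and "finite_dim_over K"
  shows "projective_rmod TYPE('m::ab_group_add) TYPE('n::ab_group_add) act cmp K (reg_action act cmp)"
proof -
  interpret YDK sc act cmp K
    by unfold_locales (use assms in auto)
  obtain bs where bs: "isbasis K bs" "\<forall>i<length bs. \<exists>d. homog cmp d (bs ! i)"
    using hbasis_ex[OF assms(5)] by blast
  interpret YDB sc act cmp K bs
    by unfold_locales (use bs in auto)
  show ?thesis unfolding projective_rmod_def
  proof (intro conjI allI impI)
    show "is_rmod act cmp K (reg_action act cmp)" by (rule reg_rmod)
    fix rhoN :: "'m \<Rightarrow> 'a \<Rightarrow> 'a \<Rightarrow> 'm" and rhoN' :: "'n \<Rightarrow> 'a \<Rightarrow> 'a \<Rightarrow> 'n" and p f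
    assume H: "is_rmod act cmp K rhoN \<and> is_rmod act cmp K rhoN' \<and> rhom rhoN rhoN' p \<and> surj p \<and>
       rhom (reg_action act cmp) rhoN' f"
    hence RN: "is_rmod act cmp K rhoN" and RN': "is_rmod act cmp K rhoN'" and P: "rhom rhoN rhoN' p"
      and sp: "surj p" and F: "rhom (reg_action act cmp) rhoN' f" by auto
    have Pm: "p (rhoN n a b) = rhoN' (p n) a b" for n a b using P unfolding rhom_def by auto
    have Fm: "f (reg_action act cmp n a b) = rhoN' (f n) a b" for n a b using F unfolding rhom_def by auto
    have fx: "rhoN' (f 1) 1 x = f x" for x using Fm[of 1 1 x] by (simp add: ra_one_left)
    have inv': "rhoN' (f 1) x 1 = rhoN' (f 1) 1 x" for x
      using Fm[of 1 x 1] Fm[of 1 1 x] by (simp add: ra_one_left)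
    obtain n0 where n0: "p n0 = f 1" using sp by (metis surjD)
    define z where "z = EE rhoN n0"
    have zinv: "rhoN z x 1 = rhoN z 1 x" for x unfolding z_def by (rule E_inv[OF RN])
    have pz: "p z = f 1" unfolding z_def E_hom[OF P] n0 by (rule E_fix[OF RN' inv'])
    define h where "h m = rhoN z 1 m" for m
    have "rhom (reg_action act cmp) rhoN h" unfolding rhom_def
    proof (intro conjI allI)
      fix x y show "h (x + y) = h x + h y" unfolding h_def by (rule rho_add3[OF RN])
    next
      fix m a b
      have "rhoN (h m) a b = (\<Sum>g\<in>gsupp cmp m. rhoN z (act g a) (cmp g m * b))"
        unfolding h_def by (simp add: rho_assoc[OF RN] bop_one_left)
      also have "\<dots> = (\<Sum>g\<in>gsupp cmp m. rhoN z 1 (act g a * cmp g m * b))"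
        by (rule sum.cong[OF refl]) (simp only: inv_mult[OF RN zinv, of "act _ a"] mult.assoc)
      also have "\<dots> = h (reg_action act cmp m a b)"
        unfolding h_def reg_action_def by (rule rho_sum3[OF RN, symmetric])
      finally show "h (reg_action act cmp m a b) = rhoN (h m) a b" by simp
    qed
    moreover have "p (h x) = f x" for x unfolding h_def Pm pz by (rule fx)
    ultimately show "\<exists>h. rhom (reg_action act cmp) rhoN h \<and> (\<forall>x. p (h x) = f x)" by blast
  qed
qed


end
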